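(* There exists an absolute constant $C>0$ such that for every number of items $m\ge2$ there exist a unit-demand value distribution $\mathcal{D}$ over $m$ items and a production cost vector $c\in\mathbb{R}_+^m$ with $$\textsc{BuyManyProfit}_c(\mathcal{D})\ \ge\ C\,m\,\textsc{SProfit}_c(\mathcal{D}),$$ i.e. $\textsc{BuyManyProfit}_c(\mathcal{D})=\Omega(m)\,\textsc{SProfit}_c(\mathcal{D})$.
   Context: Unit-demand buyer: valuation $v$ with $v_j\ge0$ per item, $v(S)=\max_{j\in S}v_j$. Lotteries $\lambda\in\Delta_m=\{\lambda\in[0,1]^m:\sum_j\lambda_j\le1\}$, $v(\lambda)=\sum_jv_j\lambda_j$. A pricing function $p$ assigns a price $p(\lambda)\ge0$ to every lottery; buyer $v$ chooses $\lambda_{v,p}\in\arg\max_\lambda(v(\lambda)-p(\lambda))$. $p$ is buy-many if no buyer type can get higher utility by adaptively purchasing a (random) sequence of lotteries (each depending on previous outcomes), receiving the union of allocated items and paying the sum of prices, than by buying a single lottery. An item pricing is a vector $(p_1,\dots,p_m)\in\mathbb{R}_+^m$, i.e. $p(\lambda)=\sum_jp_j\lambda_j$ with the buyer buying an item maximizing $v_j-p_j$ (if nonnegative). Given production costs $c\in\mathbb{R}_+^m$, the profit of pricing $p$ is $\textsc{Profit}_{p,c}(\mathcal{D})=\mathbb{E}_{v\sim\mathcal{D}}[p(\lambda_{v,p})-c\cdot\lambda_{v,p}]$; $\textsc{SProfit}_c(\mathcal{D})$ is the maximum profit over item pricings, and $\textsc{BuyManyProfit}_c(\mathcal{D})$ the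 maximum profit over buy-many pricings. *)

theory Defs
  imports "HOL-Probability.Probability"
begin

text \<open>Items are 0,...,m-1. A valuation is a function nat => real (only the
values at j < m matter). A lottery is a function nat => real vanishing outside
the items.\<close>

type_synonym valuation = "nat \<Rightarrow> real"
type_synonym lottery = "nat \<Rightarrow> real"
type_synonym pricing = "lottery \<Rightarrow> real"

definition lotteries :: "nat \<Rightarrow> lottery set" where
  "lotteries m = {l. (\<forall>j. 0 \<le> l j \<and> l j \<le> 1) \<and> (\<forall>j\<ge>m. l j = 0) \<and> (\<Sum>j<m. l j) \<le> 1}"

definition lval :: "nat \<Rightarrow> valuation \<Rightarrow> lottery \<Rightarrow> real" where
  "lval m v l = (\<Sum>j<m. v j * l j)"

definition setval :: "valuation \<Rightarrow> nat set \<Rightarrow> real" where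
  "setval v S = (if S = {} then 0 else Max (v ` S))"

definition unit_demand :: "nat \<Rightarrow> valuation \<Rightarrow> bool" where
  "unit_demand m v \<longleftrightarrow> (\<forall>j<m. 0 \<le> v j)"

text \<open>Adaptive purchasing strategies: stop, or buy a lottery and continue
depending on the outcome (Some j = item j allocated, None = nothing).\<close>
datatype strategy = Stop | Buy lottery "nat option \<Rightarrow> strategy"

primrec valid_strategy :: "nat \<Rightarrow> strategy \<Rightarrow> bool" where
  "valid_strategy m Stop = True"
| "valid_strategy m (Buy l k) = (l \<in> lotteries m \<and> (\<forall>r. valid_strategy m (k r)))"

text \<open>Expected utility of following a strategy, having already obtained the items in S.\<close>
primrec strat_util :: "nat \<Rightarrow> valuation \<Rightarrow> pricing \<Rightarrow> strategy \<Rightarrow> nat set \<Rightarrow> real" where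
  "strat_util m v p Stop S = setval v S"
| "strat_util m v p (Buy l k) S =
     - p l + (\<Sum>j<m. l j * strat_util m v p (k (Some j)) (insert j S))
     + (1 - (\<Sum>j<m. l j)) * strat_util m v p (k None) S"

definition pricing_fn :: "nat \<Rightarrow> pricing \<Rightarrow> bool" where
  "pricing_fn m p \<longleftrightarrow> (\<forall>l\<in>lotteries m. 0 \<le> p l)"

definition buy_many :: "nat \<Rightarrow> pricing \<Rightarrow> bool" where
  "buy_many m p \<longleftrightarrow> pricing_fn m p \<and>
     (\<forall>v s. unit_demand m v \<and> valid_strategy m s \<longrightarrow>
        strat_util m v p s {} \<le> (SUP l\<in>lotteries m. lval m v l - p l))"

definition item_pricing :: "nat \<Rightarrow> (nat \<Rightarrow> real) \<Rightarrow> pricing" where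
  "item_pricing m q = (\<lambda>l. \<Sum>j<m. q j * l j)"

definition optimal :: "nat \<Rightarrow> pricing \<Rightarrow> valuation \<Rightarrow> lottery set" where
  "optimal m p v = {l \<in> lotteries m. \<forall>l'\<in>lotteries m. lval m v l' - p l' \<le> lval m v l - p l}"

definition valid_choice :: "nat \<Rightarrow> pricing \<Rightarrow> valuation pmf \<Rightarrow> (valuation \<Rightarrow> lottery) \<Rightarrow> bool" where
  "valid_choice m p D sel \<longleftrightarrow> (\<forall>v\<in>set_pmf D. sel v \<in> optimal m p v)"

definition Profit :: "nat \<Rightarrow> (nat \<Rightarrow> real) \<Rightarrow> valuation pmf \<Rightarrow> pricing \<Rightarrow> (valuation \<Rightarrow> lottery) \<Rightarrow> real" where
  "Profit m c D p sel = measure_pmf.expectation D (\<lambda>v. p (sel v) - (\<Sum>j<m. c j * sel v j))"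

definition SProfit :: "nat \<Rightarrow> (nat \<Rightarrow> real) \<Rightarrow> valuation pmf \<Rightarrow> real" where
  "SProfit m c D = Sup {Profit m c D (item_pricing m q) sel | q sel.
      (\<forall>j<m. 0 \<le> q j) \<and> valid_choice m (item_pricing m q) D sel}"

definition BuyManyProfit :: "nat \<Rightarrow> (nat \<Rightarrow> real) \<Rightarrow> valuation pmf \<Rightarrow> real" where
  "BuyManyProfit m c D = Sup {Profit m c D p sel | p sel.
      buy_many m p \<and> valid_choice m p D sel}"

end

theory Submission
  imports Defs
begin


lemma setval_insert_le:
  assumes "finite S"
  shows "setval v (insert j S) \<le> max (setval v S) (v j)"
proof (cases "S = {}")
  case True then show ?thesis by (simp add: setval_def)
next
  case False
  then show ?thesis using assms by (simp add: setval_def Max_insert)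
qed

lemma strat_bound:
  assumes a0: "\<forall>j<m. 0 \<le> a j" and aW: "\<forall>j<m. v j - a j \<le> W"
    and ap: "\<forall>l\<in>lotteries m. (\<Sum>j<m. a j * l j) \<le> p l"
  shows "valid_strategy m s \<Longrightarrow> finite S \<Longrightarrow> strat_util m v p s S \<le> max (setval v S) W"
proof (induction s arbitrary: S)
  case Stop
  then show ?case by simp
next
  case (Buy l k)
  define M where "M = max (setval v S) W"
  from Buy.prems have lL: "l \<in> lotteries m" and kv: "\<And>r. valid_strategy m (k r)" by auto
  from lL have l0: "\<And>j. 0 \<le> l j" and ls: "(\<Sum>j<m. l j) \<le> 1" by (auto simp: lotteries_def)
  have IH: "\<And>r S'. finite S' \<Longrightarrow> strat_util m v p (k r) S' \<le> max (setval v S') W"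
    using Buy.IH kv by auto
  have s1: "strat_util m v p (k (Some j)) (insert j S) \<le> M + a j" if "j < m" for j
  proof -
    have "strat_util m v p (k (Some j)) (insert j S) \<le> max (setval v (insert j S)) W"
      using IH Buy.prems by auto
    also have "\<dots> \<le> M + a j"
      using setval_insert_le[OF \<open>finite S\<close>, of v j] a0 aW that unfolding M_def by force
    finally show ?thesis .
  qed
  have s2: "strat_util m v p (k None) S \<le> M" using IH Buy.prems unfolding M_def by auto
  have "(\<Sum>j<m. l j * strat_util m v p (k (Some j)) (insert j S)) \<le> (\<Sum>j<m. l j * (M + a j))"
    by (rule sum_mono) (use s1 l0 in \<open>auto intro: mult_left_mono\<close>)
  also have "\<dots> = (\<Sum>j<m. l j) * M + (\<Sum>j<m. a j * l j)"
    by (simp add: algebra_simps sum.distrib sum_distrib_left)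
  finally have A: "(\<Sum>j<m. l j * strat_util m v p (k (Some j)) (insert j S)) \<le> (\<Sum>j<m. l j) * M + (\<Sum>j<m. a j * l j)" .
  have B: "(1 - (\<Sum>j<m. l j)) * strat_util m v p (k None) S \<le> (1 - (\<Sum>j<m. l j)) * M"
    using s2 ls by (intro mult_left_mono) auto
  have C: "(\<Sum>j<m. a j * l j) \<le> p l" using ap lL by auto
  have "strat_util m v p (Buy l k) S \<le> M"
    using A B C by (simp add: algebra_simps)
  then show ?case unfolding M_def .
qed

definition mp :: "nat \<Rightarrow> (nat \<Rightarrow> real) \<Rightarrow> pricing" where
  "mp m u l = Max ((\<lambda>j. l j / u j) ` {..<m})"

lemma mp_ge: "j < m \<Longrightarrow> l j / u j \<le> mp m u l"
  unfolding mp_def by (rule Max_ge) auto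

lemma mp_le: "0 < m \<Longrightarrow> (\<And>j. j < m \<Longrightarrow> l j / u j \<le> B) \<Longrightarrow> mp m u l \<le> B"
  unfolding mp_def by (subst Max_le_iff) auto

lemma mp_nonneg:
  assumes "0 < m" "\<forall>j<m. 0 < u j" "l \<in> lotteries m"
  shows "0 \<le> mp m u l"
proof -
  have "l 0 / u 0 \<ge> 0" using assms by (auto simp: lotteries_def)
  then show ?thesis using mp_ge[of 0 m l u] assms by linarith
qed

lemma zero_lottery: "(\<lambda>_. 0) \<in> lotteries m"
  by (simp add: lotteries_def)

lemma mp_buy_many:
  assumes m0: "0 < m" and u0: "\<forall>j<m. 0 < u j"
  shows "buy_many m (mp m u)"
  unfolding buy_many_def
proof (intro conjI allI impI)
  show "pricing_fn m (mp m u)" unfolding pricing_fn_def using mp_nonneg[OF m0 u0] by auto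
  fix v s assume H: "unit_demand m v \<and> valid_strategy m s"
  then have v0: "\<forall>j<m. 0 \<le> v j" and vs: "valid_strategy m s" by (auto simp: unit_demand_def)
  define W where "W = (SUP l\<in>lotteries m. lval m v l - mp m u l)"
  have bdd: "bdd_above ((\<lambda>l. lval m v l - mp m u l) ` lotteries m)"
  proof (rule bdd_aboveI2)
    fix l assume lL: "l \<in> lotteries m"
    have "lval m v l \<le> (\<Sum>j<m. v j)"
      unfolding lval_def
    proof (rule sum_mono)
      fix j assume "j \<in> {..<m}"
      then show "v j * l j \<le> v j" using lL v0 by (auto simp: lotteries_def intro: mult_left_le)
    qed
    then show "lval m v l - mp m u l \<le> (\<Sum>j<m. v j)" using mp_nonneg[OF m0 u0 lL] by linarith
  qed
  have upper: "lval m v l - mp m u l \<le> W" if "l \<in> lotteries m" for l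
    unfolding W_def by (rule cSUP_upper[OF that bdd])
  have "mp m u (\<lambda>_. 0) \<le> 0" by (rule mp_le[OF m0]) simp
  then have W0: "0 \<le> W" using upper[OF zero_lottery] by (simp add: lval_def)
  define a where "a j = max (v j - W) 0" for j
  define J where "J = {j\<in>{..<m}. W < v j}"
  have finJ: "finite J" unfolding J_def by auto
  have sumJ: "(\<Sum>j<m. a j * u j) = (\<Sum>j\<in>J. (v j - W) * u j)"
    unfolding J_def by (subst sum.inter_filter) (auto simp: a_def intro!: sum.cong)
  have au: "(\<Sum>j<m. a j * u j) \<le> 1"
  proof (rule ccontr)
    assume "\<not> ?thesis"
    then have gt: "(\<Sum>j\<in>J. (v j - W) * u j) > 1" using sumJ by simp
    have Jne: "J \<noteq> {}" using gt by auto
    define S where "S = (\<Sum>j\<in>J. u j)"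
    have uJ: "\<And>j. j \<in> J \<Longrightarrow> 0 < u j" using u0 unfolding J_def by auto
    have S0: "0 < S" unfolding S_def using finJ Jne uJ by (intro sum_pos) auto
    define lam where "lam j = (if j \<in> J then u j / S else 0)" for j
    have ujS: "u j \<le> S" if "j \<in> J" for j
      unfolding S_def using finJ that uJ by (intro member_le_sum) (auto intro: less_imp_le)
    have lamsum: "(\<Sum>j<m. lam j) = 1"
    proof -
      have "(\<Sum>j<m. lam j) = (\<Sum>j\<in>J. u j / S)"
        unfolding lam_def J_def by (subst sum.inter_filter[symmetric]) auto
      also have "\<dots> = 1" using S0 by (simp add: sum_divide_distrib[symmetric] S_def)
      finally show ?thesis .
    qed
    have lamL: "lam \<in> lotteries m"
      unfolding lotteries_def using lamsum ujS uJ S0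
      by (auto simp: lam_def J_def intro: less_imp_le)
    have mplam: "mp m u lam \<le> 1 / S"
      by (rule mp_le[OF m0]) (use S0 uJ in \<open>auto simp: lam_def\<close>)
    have lv: "lval m v lam = (\<Sum>j\<in>J. v j * u j) / S"
    proof -
      have "lval m v lam = (\<Sum>j<m. if j \<in> J then v j * (u j / S) else 0)"
        unfolding lval_def lam_def by (intro sum.cong) auto
      also have "\<dots> = (\<Sum>j\<in>J. v j * (u j / S))"
        unfolding J_def by (simp only: sum.inter_filter[OF finite_lessThan]) (auto intro!: sum.cong)
      also have "\<dots> = (\<Sum>j\<in>J. v j * u j) / S" by (simp add: sum_divide_distrib)
      finally show ?thesis .
    qed
    have "(\<Sum>j\<in>J. (v j - W) * u j) = (\<Sum>j\<in>J. v j * u j) - W * S"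
      by (simp add: S_def algebra_simps sum_subtractf sum_distrib_left)
    then have "(\<Sum>j\<in>J. v j * u j) - 1 > W * S" using gt by linarith
    then have "((\<Sum>j\<in>J. v j * u j) - 1) / S > W" using S0 by (simp add: field_simps)
    moreover have "((\<Sum>j\<in>J. v j * u j) - 1) / S \<le> lval m v lam - mp m u lam"
      using mplam lv S0 by (simp add: diff_divide_distrib)
    ultimately show False using upper[OF lamL] by linarith
  qed
  have a0: "\<forall>j<m. 0 \<le> a j" by (simp add: a_def)
  have aW: "\<forall>j<m. v j - a j \<le> W" using W0 by (auto simp: a_def max_def)
  have ap: "\<forall>l\<in>lotteries m. (\<Sum>j<m. a j * l j) \<le> mp m u l"
  proof
    fix l assume lL: "l \<in> lotteries m"
    have mpn: "0 \<le> mp m u l" by (rule mp_nonneg[OF m0 u0 lL])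
    have "(\<Sum>j<m. a j * l j) \<le> (\<Sum>j<m. a j * (u j * mp m u l))"
    proof (rule sum_mono)
      fix j assume j: "j \<in> {..<m}"
      have "l j / u j \<le> mp m u l" using mp_ge j by auto
      then have "l j \<le> u j * mp m u l" using u0 j by (auto simp: divide_le_eq mult.commute)
      then show "a j * l j \<le> a j * (u j * mp m u l)" using a0 j by (auto intro: mult_left_mono)
    qed
    also have "\<dots> = (\<Sum>j<m. a j * u j) * mp m u l" by (simp add: sum_distrib_left sum_distrib_right algebra_simps)
    also have "\<dots> \<le> mp m u l" using mult_right_mono[OF au mpn] by simp
    finally show "(\<Sum>j<m. a j * l j) \<le> mp m u l" .
  qed
  have "strat_util m v (mp m u) s {} \<le> max (setval v {}) W"
    by (rule strat_bound[OF a0 aW ap vs]) simp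
  also have "\<dots> = W" using W0 by (simp add: setval_def)
  finally show "strat_util m v (mp m u) s {} \<le> (SUP l\<in>lotteries m. lval m v l - mp m u l)"
    unfolding W_def .
qed



definition tv :: "nat \<Rightarrow> real \<Rightarrow> nat \<Rightarrow> valuation" where
  "tv m V t = (\<lambda>j. if j < m \<and> j \<noteq> t then V else 0)"

lemma unit_lottery: "i < m \<Longrightarrow> (\<lambda>j. if j = i then 1 else 0) \<in> lotteries m"
  by (auto simp: lotteries_def)

lemma item_type_bounds:
  assumes V1: "1 \<le> V" and t: "t < m" and q0: "\<forall>j<m. 0 \<le> q j"
    and opt: "lam \<in> optimal m (item_pricing m q) (tv m V t)"
  defines "prof \<equiv> item_pricing m q lam - (\<Sum>j<m. lam j)"
  shows "prof \<le> V - 1"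
    and "\<And>i. i < m \<Longrightarrow> i \<noteq> t \<Longrightarrow> prof \<le> q i - 1"
    and "(\<forall>j<m. j \<noteq> t \<longrightarrow> V < q j) \<Longrightarrow> prof \<le> 0"
proof -
  define v where "v = tv m V t"
  define util where "util l = (\<Sum>j<m. (v j - q j) * l j)" for l
  have utile: "lval m v l - item_pricing m q l = util l" for l
    unfolding lval_def item_pricing_def util_def by (simp add: algebra_simps sum_subtractf)
  from opt have lamL: "lam \<in> lotteries m" and
    best: "\<And>l. l \<in> lotteries m \<Longrightarrow> util l \<le> util lam"
    unfolding optimal_def v_def[symmetric] using utile by auto
  from lamL have l0: "\<And>j. 0 \<le> lam j" and ls: "(\<Sum>j<m. lam j) \<le> 1" by (auto simp: lotteries_def)
  have profe: "prof = (\<Sum>j<m. (v j - 1) * lam j) - util lam"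
    unfolding prof_def item_pricing_def util_def by (simp add: algebra_simps sum_subtractf sum.distrib)
  have E: "(\<Sum>j<m. (v j - 1) * lam j) \<le> V - 1"
  proof -
    have "(\<Sum>j<m. (v j - 1) * lam j) \<le> (\<Sum>j<m. (V - 1) * lam j)"
      by (rule sum_mono, rule mult_right_mono) (use l0 V1 in \<open>auto simp: v_def tv_def\<close>)
    also have "\<dots> = (V - 1) * (\<Sum>j<m. lam j)" by (simp add: sum_distrib_left)
    also have "\<dots> \<le> V - 1" using ls V1 by (simp add: mult_left_le)
    finally show ?thesis .
  qed
  have u0: "0 \<le> util lam" using best[OF zero_lottery] by (simp add: util_def)
  show "prof \<le> V - 1" using profe E u0 by linarith
  show "prof \<le> q i - 1" if i: "i < m" "i \<noteq> t" for i
  proof -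
    have "util (\<lambda>j. if j = i then 1 else 0) = V - q i"
      using i unfolding util_def v_def tv_def by (simp add: if_distrib cong: if_cong)
    then have "V - q i \<le> util lam" using best[OF unit_lottery[OF i(1)]] by simp
    then show ?thesis using profe E by linarith
  qed
  show "prof \<le> 0" if big: "\<forall>j<m. j \<noteq> t \<longrightarrow> V < q j"
  proof -
    define d where "d j = (q j - v j) * lam j" for j
    have d0: "\<And>j. j \<in> {..<m} \<Longrightarrow> 0 \<le> d j"
      using big q0 l0 V1 unfolding d_def v_def tv_def by (auto intro!: mult_nonneg_nonneg)
    have "(\<Sum>j<m. d j) = - util lam" unfolding d_def util_def by (simp add: algebra_simps sum_negf[symmetric])
    moreover have "0 \<le> (\<Sum>j<m. d j)" using d0 by (rule sum_nonneg)
    ultimately have "(\<Sum>j<m. d j) = 0" using u0 by linarith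
    then have dz: "\<And>j. j < m \<Longrightarrow> d j = 0" using sum_nonneg_eq_0_iff[of "{..<m}" d] d0 by auto
    have lz: "lam j = 0" if "j < m" "j \<noteq> t" for j
    proof -
      have "(q j - V) * lam j = 0" using dz[OF that(1)] that unfolding d_def v_def tv_def by simp
      moreover have "q j - V > 0" using big that by auto
      ultimately show ?thesis by simp
    qed
    have "(\<Sum>j<m. (v j - 1) * lam j) \<le> (\<Sum>j<m. 0)"
      by (rule sum_mono) (use lz l0 in \<open>auto simp: v_def tv_def\<close>)
    then show ?thesis using profe u0 by simp
  qed
qed

lemma geom_tail:
  fixes x :: real
  assumes x: "0 < x" and A: "finite A" and big: "\<forall>t\<in>A. x \<le> 2 ^ t"
  shows "(\<Sum>t\<in>A. (1/2::real) ^ t) \<le> 2 / x"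
proof (cases "A = {}")
  case True then show ?thesis using x by simp
next
  case False
  define k where "k = Min A"
  define n where "n = Suc (Max A)"
  have kn: "k \<le> n" unfolding k_def n_def using A False by (simp add: Max_ge Min_in le_SucI)
  have sub: "A \<subseteq> {k..<n}" unfolding k_def n_def using A False by (auto simp: less_Suc_eq_le)
  have geo: "(\<Sum>t\<in>{k..<n'}. (1/2::real) ^ t) = 2 * (1/2)^k - 2 * (1/2)^n'" if "k \<le> n'" for n'
    using that
  proof (induction n' rule: nat_induct_at_least)
    case base then show ?case by simp
  next
    case (Suc n') then show ?case by (simp add: sum.atLeastLessThan_Suc)
  qed
  have "(\<Sum>t\<in>A. (1/2::real) ^ t) \<le> (\<Sum>t\<in>{k..<n}. (1/2::real) ^ t)"
    by (rule sum_mono2) (use sub in auto)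
  also have "\<dots> \<le> 2 * (1/2)^k" using geo[OF kn] by simp
  also have "\<dots> \<le> 2 / x"
  proof -
    have "k \<in> A" unfolding k_def using A False by simp
    then have "x \<le> 2 ^ k" using big by auto
    then have "(1/2::real)^k \<le> 1 / x" using x by (simp add: power_one_over field_simps)
    then show ?thesis by simp
  qed
  finally show ?thesis .
qed



definition UU :: "nat \<Rightarrow> real" where "UU m = 2 ^ m - 1"
definition uu :: "nat \<Rightarrow> nat \<Rightarrow> real" where "uu m j = 2 ^ j / UU m"
definition VV :: "nat \<Rightarrow> nat \<Rightarrow> real" where "VV m t = 1 / (1 - uu m t)"
definition tvt :: "nat \<Rightarrow> nat \<Rightarrow> valuation" where "tvt m t = tv m (VV m t) t"
definition pw :: "nat \<Rightarrow> nat \<Rightarrow> real" where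
  "pw m t = (if t < m then 2 ^ (m - 1) / UU m * (1/2) ^ t else 0)"
definition KK :: "nat \<Rightarrow> real" where "KK m = 2 ^ (m - 1) / (UU m)^2"

context fixes m :: nat assumes m2: "2 \<le> m"
begin

lemma UU_ge: "3 \<le> UU m"
proof -
  have "(2::real) ^ 2 \<le> 2 ^ m" using m2 by (intro power_increasing) auto
  then show ?thesis by (simp add: UU_def)
qed

lemma UU_pos: "0 < UU m" using UU_ge by simp

lemma uu_pos: "0 < uu m j" using UU_pos by (simp add: uu_def)

lemma sum_uu: "(\<Sum>j<m. uu m j) = 1"
proof -
  have "(\<Sum>j<m. uu m j) = (\<Sum>j<m. (2::real) ^ j) / UU m" by (simp add: uu_def sum_divide_distrib)
  also have "(\<Sum>j<m. (2::real) ^ j) = 2 ^ m - 1" by (simp add: geometric_sum)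
  finally show ?thesis using UU_pos by (simp add: UU_def)
qed

lemma uu_le: assumes "t < m" shows "uu m t \<le> 3/4"
proof -
  obtain k where k: "m = Suc k" using m2 by (cases m) auto
  have "(2::real) ^ t \<le> 2 ^ k" using assms k by (intro power_increasing) auto
  moreover have "(4::real) \<le> 2 ^ k * 2"
  proof -
    have "(2::real) ^ 1 \<le> 2 ^ k" using m2 k by (intro power_increasing) auto
    then show ?thesis by simp
  qed
  moreover have "(2::real)^m = 2 * 2^k" using k by simp
  ultimately have "4 * 2 ^ t \<le> 3 * ((2::real) ^ m - 1)" by (smt (verit))
  then show ?thesis using UU_pos by (simp add: uu_def UU_def field_simps)
qed

lemma uu_pair: assumes "j < m" "t < m" "j \<noteq> t" shows "uu m j + uu m t \<le> 1"
proof -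
  have "(\<Sum>i\<in>{j,t}. uu m i) \<le> (\<Sum>i<m. uu m i)"
    by (rule sum_mono2) (use assms uu_pos in \<open>auto intro: less_imp_le\<close>)
  then show ?thesis using assms sum_uu by simp
qed

lemma sum_uu_minus: assumes "t < m" shows "(\<Sum>j<m. if j \<noteq> t then uu m j else 0) = 1 - uu m t"
proof -
  have "(\<Sum>j<m. if j \<noteq> t then uu m j else 0) = (\<Sum>j<m. uu m j) - uu m t"
  proof -
    have "(\<Sum>j<m. uu m j) = (\<Sum>j<m. if j \<noteq> t then uu m j else 0) + (\<Sum>j<m. if j = t then uu m j else 0)"
      by (subst sum.distrib[symmetric]) (auto intro!: sum.cong)
    also have "(\<Sum>j<m. if j = t then uu m j else 0) = uu m t" using assms by simp
    finally show ?thesis by simp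
  qed
  then show ?thesis using sum_uu by simp
qed

lemma VV_ge1: assumes "t < m" shows "1 \<le> VV m t"
  using uu_le[OF assms] uu_pos[of t] by (simp add: VV_def field_simps)

lemma VV_pos: assumes "t < m" shows "0 < VV m t" using VV_ge1[OF assms] by simp

lemma r_lower: assumes "t < m" shows "uu m t \<le> VV m t - 1"
proof -
  have a: "0 < 1 - uu m t" "1 - uu m t \<le> 1" using uu_le[OF assms] uu_pos[of t] by auto
  have "VV m t - 1 = uu m t / (1 - uu m t)" using a by (simp add: VV_def field_simps)
  also have "\<dots> \<ge> uu m t" using a uu_pos[of t] by (simp add: le_divide_eq)
  finally show ?thesis .
qed

lemma r_upper: assumes "t < m" shows "VV m t - 1 \<le> 4 * uu m t"
proof -
  have a: "1/4 \<le> 1 - uu m t" using uu_le[OF assms] by auto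
  have "VV m t - 1 = uu m t / (1 - uu m t)" using a by (simp add: VV_def field_simps)
  also have "\<dots> \<le> 4 * uu m t" using a uu_pos[of t] by (simp add: divide_le_eq field_simps)
  finally show ?thesis .
qed

lemma VV_mono: assumes "t < m" shows "VV m 0 \<le> VV m t"
proof -
  have "uu m 0 \<le> uu m t" using UU_pos by (simp add: uu_def divide_right_mono)
  then show ?thesis using uu_le[OF assms] uu_le[of 0] m2 by (simp add: VV_def frac_le)
qed

lemma pw_nonneg: "0 \<le> pw m t" using UU_pos by (simp add: pw_def)

lemma pw_pos: "t < m \<Longrightarrow> 0 < pw m t" using UU_pos by (simp add: pw_def)

lemma sum_pw: "(\<Sum>t<m. pw m t) = 1"
proof -
  obtain k where k: "m = Suc k" using m2 by (cases m) auto
  have "(\<Sum>t<m. pw m t) = (\<Sum>t<m. 2 ^ k / UU m * (1/2::real) ^ t)"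
    by (intro sum.cong) (auto simp: pw_def k)
  also have "\<dots> = 2 ^ k / UU m * (\<Sum>t<m. (1/2::real) ^ t)"
    by (simp only: sum_distrib_left)
  also have "(\<Sum>t<m. (1/2::real) ^ t) = ((1/2)^m - 1) / (1/2 - 1)" by (rule geometric_sum) simp
  also have "((1/2::real)^m - 1) / (1/2 - 1) = 2 * (1 - (1/2)^m)" by (simp add: field_simps)
  also have "2 ^ k / UU m * (2 * (1 - (1/2::real)^m)) = (2 ^ m - 1) / UU m"
    using UU_pos by (simp add: k field_simps power_one_over)
  finally show ?thesis using UU_pos by (simp add: UU_def)
qed

lemma pw_uu: "t < m \<Longrightarrow> pw m t * uu m t = KK m"
  using UU_pos by (simp add: pw_def uu_def KK_def power_one_over power2_eq_square field_simps)

end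


definition pii :: "nat \<Rightarrow> nat pmf" where "pii m = embed_pmf (pw m)"
definition DD :: "nat \<Rightarrow> valuation pmf" where "DD m = map_pmf (tvt m) (pii m)"
definition lamB :: "nat \<Rightarrow> nat \<Rightarrow> lottery" where
  "lamB m t = (\<lambda>j. if j < m \<and> j \<noteq> t then uu m j / (1 - uu m t) else 0)"
definition selB :: "nat \<Rightarrow> valuation \<Rightarrow> lottery" where
  "selB m v = lamB m (SOME t. t < m \<and> tvt m t = v)"

lemma sum_unit: "i < (m::nat) \<Longrightarrow> (\<Sum>j<m. f j * (if j = i then 1 else 0)) = (f i :: real)"
proof -
  assume i: "i < m"
  have "(\<Sum>j<m. f j * (if j = i then 1 else 0)) = (\<Sum>j<m. if j = i then f j else 0)"
    by (intro sum.cong) auto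
  also have "\<dots> = f i" using i by (subst sum.delta) auto
  finally show ?thesis .
qed

lemma bm_bound:
  assumes bm: "buy_many m p" and ud: "unit_demand m v" and opt: "lam \<in> optimal m p v"
  shows "p lam \<le> lval m v lam"
proof (rule ccontr)
  assume neg: "\<not> ?thesis"
  have all: "\<forall>v s. unit_demand m v \<and> valid_strategy m s \<longrightarrow>
        strat_util m v p s {} \<le> (SUP l\<in>lotteries m. lval m v l - p l)"
    using bm unfolding buy_many_def by blast
  have "strat_util m v p Stop {} \<le> (SUP l\<in>lotteries m. lval m v l - p l)"
    using all[rule_format, of v Stop] ud by simp
  then have S0: "0 \<le> (SUP l\<in>lotteries m. lval m v l - p l)" by (simp add: setval_def)
  have "(SUP l\<in>lotteries m. lval m v l - p l) \<le> lval m v lam - p lam"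
    using opt zero_lottery[of m] unfolding optimal_def by (intro cSUP_least) auto
  then show False using S0 neg by linarith
qed

context fixes m :: nat assumes m2: "2 \<le> m"
begin

lemma pw_prob: "(\<integral>\<^sup>+x. ennreal (pw m x) \<partial>count_space UNIV) = 1"
proof -
  have "(\<integral>\<^sup>+x. ennreal (pw m x) \<partial>count_space UNIV) = (\<Sum>x<m. ennreal (pw m x))"
    by (rule nn_integral_count_space') (auto simp: pw_def)
  also have "\<dots> = ennreal (\<Sum>x<m. pw m x)" using pw_nonneg[OF m2] by simp
  finally show ?thesis using sum_pw[OF m2] by simp
qed

lemma pmf_pii: "pmf (pii m) t = pw m t"
  unfolding pii_def by (rule pmf_embed_pmf[OF pw_nonneg[OF m2] pw_prob])

lemma set_pii: "set_pmf (pii m) = {..<m}"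
  unfolding pii_def using pw_pos[OF m2]
  by (subst set_embed_pmf[OF pw_nonneg[OF m2] pw_prob]) (auto simp: pw_def)

lemma set_DD: "set_pmf (DD m) = tvt m ` {..<m}"
  by (simp add: DD_def set_pii)

lemma profit_sum:
  "Profit m (\<lambda>_. 1) (DD m) p sel =
     (\<Sum>t<m. pw m t * (p (sel (tvt m t)) - (\<Sum>j<m. sel (tvt m t) j)))"
  unfolding Profit_def DD_def
  by (simp, subst integral_measure_pmf_real[of "{..<m}"]) (auto simp: set_pii pmf_pii mult.commute)

lemma tvt_inj: assumes "s < m" "t < m" "tvt m s = tvt m t" shows "s = t"
proof (rule ccontr)
  assume "s \<noteq> t"
  have "tvt m s s = tvt m t s" using assms by simp
  then have "0 = VV m t" using assms \<open>s \<noteq> t\<close> by (simp add: tvt_def tv_def)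
  then show False using VV_pos[OF m2 assms(2)] by simp
qed

lemma selB_eq: assumes "t < m" shows "selB m (tvt m t) = lamB m t"
proof -
  have ex: "\<exists>s. s < m \<and> tvt m s = tvt m t" using assms by auto
  have "(SOME s. s < m \<and> tvt m s = tvt m t) = t"
    using someI_ex[OF ex] tvt_inj assms by blast
  then show ?thesis by (simp add: selB_def)
qed

lemma one_minus_uu: "t < m \<Longrightarrow> 0 < 1 - uu m t" using uu_le[OF m2] by fastforce

lemma sum_lamB: assumes "t < m" shows "(\<Sum>j<m. lamB m t j) = 1"
proof -
  have "(\<Sum>j<m. lamB m t j) = (\<Sum>j<m. (if j \<noteq> t then uu m j else 0) / (1 - uu m t))"
    by (intro sum.cong) (auto simp: lamB_def)
  also have "\<dots> = (1 - uu m t) / (1 - uu m t)"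
    by (simp only: sum_divide_distrib[symmetric] sum_uu_minus[OF m2 assms])
  finally show ?thesis using one_minus_uu[OF assms] by simp
qed

lemma lamB_L: assumes "t < m" shows "lamB m t \<in> lotteries m"
proof -
  have "lamB m t j \<le> 1" for j
    using uu_pair[OF m2, of j t] one_minus_uu[OF assms] assms by (auto simp: lamB_def)
  moreover have "0 \<le> lamB m t j" for j
    using uu_pos[OF m2, of j] one_minus_uu[OF assms] by (auto simp: lamB_def)
  ultimately show ?thesis using sum_lamB[OF assms] by (auto simp: lotteries_def lamB_def)
qed

lemma mp_lamB: assumes "t < m" shows "mp m (uu m) (lamB m t) = VV m t"
proof (rule antisym)
  show "mp m (uu m) (lamB m t) \<le> VV m t"
    by (rule mp_le) (use m2 uu_pos[OF m2] one_minus_uu[OF assms] in \<open>auto simp: lamB_def VV_def\<close>)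
  define i where "i = (if t = 0 then 1 else 0::nat)"
  have i: "i < m" "i \<noteq> t" using m2 by (auto simp: i_def)
  have "lamB m t i / uu m i = VV m t"
    using i uu_pos[OF m2, of i] by (simp add: lamB_def VV_def)
  then show "VV m t \<le> mp m (uu m) (lamB m t)" using mp_ge[OF i(1)] by metis
qed

lemma lval_lamB: assumes "t < m" shows "lval m (tvt m t) (lamB m t) = VV m t"
proof -
  have "lval m (tvt m t) (lamB m t) = (\<Sum>j<m. VV m t * lamB m t j)"
    unfolding lval_def by (intro sum.cong) (auto simp: tvt_def tv_def lamB_def)
  also have "\<dots> = VV m t" using sum_lamB[OF assms] by (simp add: sum_distrib_left[symmetric])
  finally show ?thesis .
qed

lemma lamB_opt: assumes t: "t < m" shows "lamB m t \<in> optimal m (mp m (uu m)) (tvt m t)"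
  unfolding optimal_def
proof (intro CollectI conjI ballI)
  show "lamB m t \<in> lotteries m" by (rule lamB_L[OF t])
  fix l assume lL: "l \<in> lotteries m"
  have m0: "0 < m" using m2 by simp
  have lj: "l j \<le> uu m j * mp m (uu m) l" if "j < m" for j
    using mp_ge[OF that, of l "uu m"] uu_pos[OF m2, of j] by (simp add: divide_le_eq mult.commute)
  have "lval m (tvt m t) l \<le> (\<Sum>j<m. VV m t * (if j \<noteq> t then uu m j else 0) * mp m (uu m) l)"
    unfolding lval_def
  proof (rule sum_mono)
    fix j assume j: "j \<in> {..<m}"
    show "tvt m t j * l j \<le> VV m t * (if j \<noteq> t then uu m j else 0) * mp m (uu m) l"
      using lj[of j] j VV_pos[OF m2 t] by (auto simp: tvt_def tv_def mult.assoc intro: mult_left_mono)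
  qed
  also have "\<dots> = VV m t * (\<Sum>j<m. (if j \<noteq> t then uu m j else 0)) * mp m (uu m) l"
    by (simp add: sum_distrib_left sum_distrib_right mult.assoc)
  also have "\<dots> = mp m (uu m) l"
    using one_minus_uu[OF t] by (simp add: sum_uu_minus[OF m2 t] VV_def)
  finally show "lval m (tvt m t) l - mp m (uu m) l
      \<le> lval m (tvt m t) (lamB m t) - mp m (uu m) (lamB m t)"
    using lval_lamB[OF t] mp_lamB[OF t] by simp
qed

end


context fixes m :: nat assumes m2: "2 \<le> m"
begin

lemma ud_tvt: "t < m \<Longrightarrow> unit_demand m (tvt m t)"
  using VV_pos[OF m2] by (auto simp: unit_demand_def tvt_def tv_def intro: less_imp_le)

lemma bm_profit_bdd:
  assumes bm: "buy_many m p" and vc: "valid_choice m p (DD m) sel"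
  shows "Profit m (\<lambda>_. 1) (DD m) p sel \<le> (\<Sum>t<m. pw m t * (\<Sum>j<m. tvt m t j))"
  unfolding profit_sum[OF m2]
proof (rule sum_mono)
  fix t assume t: "t \<in> {..<m}"
  then have t': "t < m" by simp
  have opt: "sel (tvt m t) \<in> optimal m p (tvt m t)"
    using vc t unfolding valid_choice_def set_DD[OF m2] by auto
  then have L: "sel (tvt m t) \<in> lotteries m" by (simp add: optimal_def)
  have "p (sel (tvt m t)) \<le> lval m (tvt m t) (sel (tvt m t))"
    by (rule bm_bound[OF bm ud_tvt[OF t'] opt])
  also have "\<dots> \<le> (\<Sum>j<m. tvt m t j)"
    unfolding lval_def
    by (rule sum_mono) (use L ud_tvt[OF t'] in \<open>auto simp: lotteries_def unit_demand_def intro: mult_left_le\<close>)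
  finally have "p (sel (tvt m t)) - (\<Sum>j<m. sel (tvt m t) j) \<le> (\<Sum>j<m. tvt m t j)"
    using L by (smt (verit) lotteries_def mem_Collect_eq sum_nonneg)
  then show "pw m t * (p (sel (tvt m t)) - (\<Sum>j<m. sel (tvt m t) j)) \<le> pw m t * (\<Sum>j<m. tvt m t j)"
    using pw_nonneg[OF m2] by (intro mult_left_mono) auto
qed

lemma bm_elem:
  "Profit m (\<lambda>_. 1) (DD m) (mp m (uu m)) (selB m) \<in>
     {Profit m (\<lambda>_. 1) (DD m) p sel | p sel. buy_many m p \<and> valid_choice m p (DD m) sel}"
proof -
  have "buy_many m (mp m (uu m))" using m2 uu_pos[OF m2] by (intro mp_buy_many) auto
  moreover have "valid_choice m (mp m (uu m)) (DD m) (selB m)"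
    unfolding valid_choice_def set_DD[OF m2] using selB_eq[OF m2] lamB_opt[OF m2] by auto
  ultimately show ?thesis by blast
qed

lemma bm_value: "real m * KK m \<le> Profit m (\<lambda>_. 1) (DD m) (mp m (uu m)) (selB m)"
proof -
  have "Profit m (\<lambda>_. 1) (DD m) (mp m (uu m)) (selB m) = (\<Sum>t<m. pw m t * (VV m t - 1))"
    unfolding profit_sum[OF m2]
    by (intro sum.cong) (auto simp: selB_eq[OF m2] mp_lamB[OF m2] sum_lamB[OF m2])
  also have "\<dots> \<ge> (\<Sum>t<m. pw m t * uu m t)"
    by (intro sum_mono mult_left_mono) (auto simp: r_lower[OF m2] pw_nonneg[OF m2])
  also have "(\<Sum>t<m. pw m t * uu m t) = (\<Sum>t<m. KK m)" by (intro sum.cong) (auto simp: pw_uu[OF m2])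
  finally show ?thesis by simp
qed

lemma bm_lower: "real m * KK m \<le> BuyManyProfit m (\<lambda>_. 1) (DD m)"
proof -
  have "bdd_above {Profit m (\<lambda>_. 1) (DD m) p sel | p sel. buy_many m p \<and> valid_choice m p (DD m) sel}"
    by (rule bdd_aboveI[where M = "(\<Sum>t<m. pw m t * (\<Sum>j<m. tvt m t j))"]) (auto intro: bm_profit_bdd)
  then show ?thesis unfolding BuyManyProfit_def
    using bm_value cSup_upper[OF bm_elem] by (meson order_trans)
qed

end


context fixes m :: nat assumes m2: "2 \<le> m"
begin

lemma KK_pos: "0 < KK m" using UU_pos[OF m2] by (simp add: KK_def)

lemma sp_bound:
  assumes q0: "\<forall>j<m. 0 \<le> q j" and vc: "valid_choice m (item_pricing m q) (DD m) sel"
  shows "Profit m (\<lambda>_. 1) (DD m) (item_pricing m q) sel \<le> 12 * KK m"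
proof -
  define prof where "prof t = item_pricing m q (sel (tvt m t)) - (\<Sum>j<m. sel (tvt m t) j)" for t
  have opt: "sel (tvt m t) \<in> optimal m (item_pricing m q) (tv m (VV m t) t)" if "t < m" for t
    using vc that unfolding valid_choice_def set_DD[OF m2] tvt_def by auto
  obtain js where js: "js < m" "\<And>j. j < m \<Longrightarrow> q js \<le> q j"
  proof -
    have "0 \<in> {..<m}" using m2 by simp
    then have ne: "q ` {..<m} \<noteq> {}" by blast
    obtain js where "js \<in> {..<m}" "q js = Min (q ` {..<m})" using Min_in[OF _ ne] by auto
    then show ?thesis using that by (metis Min_le finite_imageI finite_lessThan imageI lessThan_iff)
  qed
  define b where "b = q js - 1"
  define g where "g t = (if q js \<le> VV m t then max b 0 else 0)" for t
  have g0: "0 \<le> g t" for t by (simp add: g_def)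
  have pg: "prof t \<le> g t" if t: "t < m" "t \<noteq> js" for t
  proof (cases "q js \<le> VV m t")
    case True
    have "prof t \<le> q js - 1"
      unfolding prof_def by (rule item_type_bounds(2)[OF VV_ge1[OF m2 t(1)] t(1) q0 opt[OF t(1)] js(1)]) (use t in auto)
    then show ?thesis using True by (simp add: g_def b_def)
  next
    case False
    have big: "\<forall>j<m. j \<noteq> t \<longrightarrow> VV m t < q j" using False js(2) by (meson less_le_trans not_le)
    have "prof t \<le> 0"
      unfolding prof_def
      by (rule item_type_bounds(3)[OF VV_ge1[OF m2 t(1)] t(1) q0 opt[OF t(1)] big])
    then show ?thesis using False by (simp add: g_def)
  qed
  have pjs: "prof js \<le> 4 * uu m js"
  proof -
    have "prof js \<le> VV m js - 1"
      unfolding prof_def by (rule item_type_bounds(1)[OF VV_ge1[OF m2 js(1)] js(1) q0 opt[OF js(1)]])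
    then show ?thesis using r_upper[OF m2 js(1)] by simp
  qed
  have "Profit m (\<lambda>_. 1) (DD m) (item_pricing m q) sel = (\<Sum>t<m. pw m t * prof t)"
    unfolding profit_sum[OF m2] prof_def ..
  also have "\<dots> \<le> (\<Sum>t<m. pw m t * g t + (if t = js then pw m t * (4 * uu m t) else 0))"
  proof (rule sum_mono)
    fix t assume t: "t \<in> {..<m}"
    show "pw m t * prof t \<le> pw m t * g t + (if t = js then pw m t * (4 * uu m t) else 0)"
    proof (cases "t = js")
      case True
      have "pw m t * prof t \<le> pw m t * (4 * uu m t)"
        using True pjs pw_nonneg[OF m2] by (intro mult_left_mono) auto
      moreover have "0 \<le> pw m t * g t" using g0 pw_nonneg[OF m2] by simp
      ultimately show ?thesis using True by simp
    next
      case False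
      then show ?thesis using pg[of t] t pw_nonneg[OF m2] by (auto intro: mult_left_mono)
    qed
  qed
  also have "\<dots> = (\<Sum>t<m. pw m t * g t) + pw m js * (4 * uu m js)"
    using js(1) by (simp add: sum.distrib sum.delta)
  also have "pw m js * (4 * uu m js) = 4 * KK m" using pw_uu[OF m2 js(1)] by simp
  also have "(\<Sum>t<m. pw m t * g t) \<le> 8 * KK m"
  proof (cases "b \<le> 0")
    case True
    then have "\<And>t. g t = 0" by (simp add: g_def max_def)
    then have "(\<Sum>t<m. pw m t * g t) = 0" by simp
    then show ?thesis using KK_pos by simp
  next
    case False
    then have b0: "0 < b" by simp
    define A where "A = {t \<in> {..<m}. q js \<le> VV m t}"
    define x where "x = b * UU m / 4"
    have x0: "0 < x" using b0 UU_pos[OF m2] by (simp add: x_def)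
    have xA: "\<forall>t\<in>A. x \<le> 2 ^ t"
    proof
      fix t assume "t \<in> A"
      then have t: "t < m" "q js \<le> VV m t" by (auto simp: A_def)
      then have "b \<le> 4 * uu m t" using r_upper[OF m2 t(1)] by (simp add: b_def)
      then show "x \<le> 2 ^ t" using UU_pos[OF m2] by (simp add: x_def uu_def field_simps)
    qed
    have "(\<Sum>t<m. pw m t * g t) = (\<Sum>t<m. if q js \<le> VV m t then b * (2 ^ (m - 1) / UU m) * (1/2)^t else 0)"
      using b0 by (intro sum.cong) (auto simp: g_def pw_def)
    also have "\<dots> = (\<Sum>t\<in>A. b * (2 ^ (m - 1) / UU m) * (1/2)^t)"
      unfolding A_def by (simp only: sum.inter_filter[OF finite_lessThan])
    also have "\<dots> = b * (2 ^ (m - 1) / UU m) * (\<Sum>t\<in>A. (1/2::real)^t)"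
      by (simp add: sum_distrib_left)
    also have "\<dots> \<le> b * (2 ^ (m - 1) / UU m) * (2 / x)"
      using geom_tail[OF x0 _ xA] b0 UU_pos[OF m2] by (intro mult_left_mono) (auto simp: A_def)
    also have "\<dots> = 8 * KK m"
      using b0 UU_pos[OF m2] by (simp add: x_def KK_def power2_eq_square field_simps)
    finally show ?thesis .
  qed
  finally show ?thesis by simp
qed

definition selS :: "valuation \<Rightarrow> lottery" where
  "selS v = (\<lambda>j. if j = (if v 0 = 0 then 1 else 0) then 1 else 0)"

lemma sp_elem:
  "Profit m (\<lambda>_. 1) (DD m) (item_pricing m (\<lambda>_. VV m 0)) selS \<in>
     {Profit m (\<lambda>_. 1) (DD m) (item_pricing m q) sel | q sel.
        (\<forall>j<m. 0 \<le> q j) \<and> valid_choice m (item_pricing m q) (DD m) sel}"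
proof -
  have m0: "0 < m" using m2 by simp
  have "valid_choice m (item_pricing m (\<lambda>_. VV m 0)) (DD m) selS"
    unfolding valid_choice_def set_DD[OF m2]
  proof (intro ballI, elim imageE)
    fix v t assume v: "v = tvt m t" and t: "t \<in> {..<m}"
    define i where "i = (if t = 0 then 1 else 0::nat)"
    have i: "i < m" "i \<noteq> t" using m2 by (auto simp: i_def)
    have sv: "selS v = (\<lambda>j. if j = i then 1 else 0)"
      using VV_pos[OF m2, of t] t m0 unfolding selS_def v i_def by (auto simp: tvt_def tv_def)
    have Vt: "VV m 0 \<le> VV m t" "0 \<le> VV m 0" using VV_mono[OF m2, of t] t VV_pos[OF m2 m0] by auto
    show "selS v \<in> optimal m (item_pricing m (\<lambda>_. VV m 0)) v"
      unfolding optimal_def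
    proof (intro CollectI conjI ballI)
      show "selS v \<in> lotteries m" unfolding sv by (rule unit_lottery[OF i(1)])
      fix l assume lL: "l \<in> lotteries m"
      have "lval m v l - item_pricing m (\<lambda>_. VV m 0) l = (\<Sum>j<m. (v j - VV m 0) * l j)"
        unfolding lval_def item_pricing_def by (simp add: algebra_simps sum_subtractf)
      also have "\<dots> \<le> (\<Sum>j<m. (VV m t - VV m 0) * l j)"
        by (rule sum_mono, rule mult_right_mono) (use lL Vt in \<open>auto simp: v tvt_def tv_def lotteries_def\<close>)
      also have "\<dots> = (VV m t - VV m 0) * (\<Sum>j<m. l j)" by (simp add: sum_distrib_left)
      also have "\<dots> \<le> VV m t - VV m 0" using lL Vt by (intro mult_left_le) (auto simp: lotteries_def)
      also have "\<dots> = lval m v (selS v) - item_pricing m (\<lambda>_. VV m 0) (selS v)"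
        unfolding sv lval_def item_pricing_def using i t
        by (simp add: sum_unit[OF i(1)] v tvt_def tv_def)
      finally show "lval m v l - item_pricing m (\<lambda>_. VV m 0) l
          \<le> lval m v (selS v) - item_pricing m (\<lambda>_. VV m 0) (selS v)" .
    qed
  qed
  moreover have "\<forall>j<m. 0 \<le> VV m 0" using VV_pos[OF m2 m0] by simp
  ultimately have "(\<forall>j<m. 0 \<le> VV m 0) \<and> valid_choice m (item_pricing m (\<lambda>_. VV m 0)) (DD m) selS" by simp
  then show ?thesis by (intro CollectI exI[of _ "\<lambda>_. VV m 0"] exI[of _ selS] conjI refl) simp_all
qed

lemma sp_value: "Profit m (\<lambda>_. 1) (DD m) (item_pricing m (\<lambda>_. VV m 0)) selS = VV m 0 - 1"
proof -
  have m0: "0 < m" using m2 by simp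
  have "Profit m (\<lambda>_. 1) (DD m) (item_pricing m (\<lambda>_. VV m 0)) selS = (\<Sum>t<m. pw m t * (VV m 0 - 1))"
    unfolding profit_sum[OF m2]
  proof (intro sum.cong refl)
    fix t assume t: "t \<in> {..<m}"
    define i where "i = (if t = 0 then 1 else 0::nat)"
    have i: "i < m" "i \<noteq> t" using m2 by (auto simp: i_def)
    have sv: "selS (tvt m t) = (\<lambda>j. if j = i then 1 else 0)"
      using VV_pos[OF m2, of t] t m0 unfolding selS_def i_def by (auto simp: tvt_def tv_def)
    have "(\<Sum>j<m. (if j = i then 1 else 0::real)) = 1" using i by (subst sum.delta) auto
    then show "pw m t * (item_pricing m (\<lambda>_. VV m 0) (selS (tvt m t)) - (\<Sum>j<m. selS (tvt m t) j))
        = pw m t * (VV m 0 - 1)"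
      unfolding sv item_pricing_def by (simp add: sum_unit[OF i(1)])
  qed
  also have "\<dots> = VV m 0 - 1" using sum_pw[OF m2] by (simp add: sum_distrib_right[symmetric])
  finally show ?thesis .
qed

lemma sp_facts: "0 < SProfit m (\<lambda>_. 1) (DD m) \<and> SProfit m (\<lambda>_. 1) (DD m) \<le> 12 * KK m"
proof -
  define X where "X = {Profit m (\<lambda>_. 1) (DD m) (item_pricing m q) sel | q sel.
        (\<forall>j<m. 0 \<le> q j) \<and> valid_choice m (item_pricing m q) (DD m) sel}"
  have ub: "\<forall>x\<in>X. x \<le> 12 * KK m" unfolding X_def using sp_bound by auto
  have el: "VV m 0 - 1 \<in> X" using sp_elem sp_value unfolding X_def by simp
  have pos: "0 < VV m 0 - 1" using r_lower[OF m2, of 0] uu_pos[OF m2, of 0] m2 by simp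
  have "VV m 0 - 1 \<le> Sup X" by (rule cSup_upper[OF el]) (use ub in \<open>auto intro: bdd_aboveI\<close>)
  moreover have "Sup X \<le> 12 * KK m" using el ub by (intro cSup_least) auto
  ultimately show ?thesis using pos unfolding SProfit_def X_def[symmetric] by simp
qed

lemma main:
  "finite (set_pmf (DD m)) \<and> (\<forall>v\<in>set_pmf (DD m). unit_demand m v) \<and> (\<forall>j<m. 0 \<le> (1::real)) \<and>
   0 < SProfit m (\<lambda>_. 1) (DD m) \<and>
   BuyManyProfit m (\<lambda>_. 1) (DD m) \<ge> 1/12 * real m * SProfit m (\<lambda>_. 1) (DD m)"
proof -
  have "1/12 * real m * SProfit m (\<lambda>_. 1) (DD m) \<le> 1/12 * real m * (12 * KK m)"
    using sp_facts by (intro mult_left_mono) auto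
  also have "\<dots> = real m * KK m" by simp
  also have "\<dots> \<le> BuyManyProfit m (\<lambda>_. 1) (DD m)" by (rule bm_lower[OF m2])
  finally have A: "1/12 * real m * SProfit m (\<lambda>_. 1) (DD m) \<le> BuyManyProfit m (\<lambda>_. 1) (DD m)" .
  have B: "finite (set_pmf (DD m))" by (simp add: set_DD[OF m2])
  have C: "\<forall>v\<in>set_pmf (DD m). unit_demand m v" using ud_tvt[OF m2] by (simp add: set_DD[OF m2])
  show ?thesis using A B C sp_facts by simp
qed

end

theorem theorem5:
  shows "\<exists>C::real. C > 0 \<and> (\<forall>m::nat. m \<ge> 2 \<longrightarrow>
    (\<exists>(D::valuation pmf) (c::nat \<Rightarrow> real).
        finite (set_pmf D) \<and> (\<forall>v\<in>set_pmf D. unit_demand m v) \<and> (\<forall>j<m. 0 \<le> c j) \<and>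
        0 < SProfit m c D \<and>
        BuyManyProfit m c D \<ge> C * real m * SProfit m c D))"
proof (intro exI[of _ "1/12"] conjI allI impI)
  fix m :: nat assume "2 \<le> m"
  then show "\<exists>(D::valuation pmf) (c::nat \<Rightarrow> real).
        finite (set_pmf D) \<and> (\<forall>v\<in>set_pmf D. unit_demand m v) \<and> (\<forall>j<m. 0 \<le> c j) \<and>
        0 < SProfit m c D \<and>
        BuyManyProfit m c D \<ge> 1/12 * real m * SProfit m c D"
    using main[of m] by (intro exI[of _ "DD m"] exI[of _ "\<lambda>_. 1"]) simp
qed simp


end
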